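(* Let $t\ge -1$ be an integer, let $\theta$ be a root of $P_t(x)=x^3-tx^2-(t+3)x-1$ and $K=\mathbb{Q}(\theta)$ (a simplest cubic field). Suppose that $\mathcal{O}_K=\mathbb{Z}[\theta]$. Then $K$ is unit reducible.
   Context: For a totally real number field $K$ with ring of integers $\mathcal{O}_K$ and unit group $\mathcal{O}_K^\times$, let $K_{>>0}$ be the set of totally positive elements and, for $a\in K_{>>0}$, $\mu(a)=\min_{x\in\mathcal{O}_K\setminus\{0\}}\mathrm{Tr}_{K/\mathbb{Q}}(ax^2)$. $K$ is called unit reducible if $\mu(a)=\min_{u\in\mathcal{O}_K^\times}\mathrm{Tr}_{K/\mathbb{Q}}(au^2)$ for all $a\in K_{>>0}$. *)

theory Defs
  imports "HOL-Computational_Algebra.Polynomial" Complex_Main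
begin

definition simplest_cubic :: "int \<Rightarrow> real poly" where
  "simplest_cubic t = [:-1, -(of_int t + 3), - of_int t, 1:]"

text \<open>Q(theta) as a subfield of the reals (theta algebraic, so Q(theta) = Q[theta]).\<close>
definition Q_adj :: "real \<Rightarrow> real set" where
  "Q_adj \<theta> = {poly (map_poly of_rat q) \<theta> | q :: rat poly. True}"

definition Z_adj :: "real \<Rightarrow> real set" where
  "Z_adj \<theta> = {poly (map_poly of_int p) \<theta> | p :: int poly. True}"

text \<open>Field embeddings of a subfield K of the reals into the complex numbers
  (extended by 0 outside K so that they form a set of functions).\<close>
definition embeddings :: "real set \<Rightarrow> (real \<Rightarrow> complex) set" where
  "embeddings K = {\<sigma>. \<sigma> 1 = 1 \<and>
      (\<forall>x\<in>K. \<forall>y\<in>K. \<sigma> (x + y) = \<sigma> x + \<sigma> y \<and> \<sigma> (x * y) = \<sigma> x * \<sigma> y) \<and>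
      (\<forall>x. x \<notin> K \<longrightarrow> \<sigma> x = 0)}"

text \<open>Trace Tr_{K/Q}: sum of all embeddings (real-valued for the fields considered).\<close>
definition trace :: "real set \<Rightarrow> real \<Rightarrow> real" where
  "trace K x = Re (\<Sum>\<sigma>\<in>embeddings K. \<sigma> x)"

definition totally_positive :: "real set \<Rightarrow> real set" where
  "totally_positive K = {a \<in> K. \<forall>\<sigma>\<in>embeddings K. \<sigma> a \<in> \<real> \<and> Re (\<sigma> a) > 0}"

definition ring_of_integers :: "real set \<Rightarrow> real set" where
  "ring_of_integers K = {x \<in> K. algebraic_int x}"

definition unit_group :: "real set \<Rightarrow> real set" where
  "unit_group K = {u \<in> ring_of_integers K. u \<noteq> 0 \<and> inverse u \<in> ring_of_integers K}"

text \<open>mu(a) = min over nonzero integers x of Tr(a x^2) (the minimum exists; we write Inf).\<close>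
definition mu :: "real set \<Rightarrow> real \<Rightarrow> real" where
  "mu K a = Inf ((\<lambda>x. trace K (a * x\<^sup>2)) ` (ring_of_integers K - {0}))"

definition unit_reducible :: "real set \<Rightarrow> bool" where
  "unit_reducible K \<longleftrightarrow>
     (\<forall>a\<in>totally_positive K. mu K a = Inf ((\<lambda>u. trace K (a * u\<^sup>2)) ` unit_group K))"

end

theory Submission
  imports Defs
begin

fun ps :: "real \<Rightarrow> nat \<Rightarrow> real" where
  "ps t 0 = 3"
| "ps t (Suc 0) = t"
| "ps t (Suc (Suc 0)) = t^2 + 2*t + 6"
| "ps t (Suc (Suc (Suc n))) = t * ps t (Suc (Suc n)) + (t+3) * ps t (Suc n) + ps t n"

lemma ps_vals:
  "ps t 0 = 3" "ps t 1 = t" "ps t 2 = t^2 + 2*t + 6" "ps t 3 = t^3 + 3*t^2 + 9*t + 3"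
  "ps t 4 = t^4 + 4*t^3 + 14*t^2 + 16*t + 18"
  "ps t 5 = t^5 + 5*t^4 + 20*t^3 + 35*t^2 + 50*t + 15"
  "ps t 6 = t^6 + 6*t^5 + 27*t^4 + 62*t^3 + 111*t^2 + 90*t + 57"
  by (simp_all add: eval_nat_numeral algebra_simps power2_eq_square power3_eq_cube)

definition W :: "real \<Rightarrow> real \<Rightarrow> real \<Rightarrow> real \<Rightarrow> nat \<Rightarrow> real" where
  "W t z0 z1 z2 i = z0^2 * ps t i + 2*z0*z1*ps t (i+1) + (2*z0*z2 + z1^2)*ps t (i+2)
      + 2*z1*z2*ps t (i+3) + z2^2 * ps t (i+4)"

definition Tq :: "real \<Rightarrow> real \<Rightarrow> real \<Rightarrow> real \<Rightarrow> real \<Rightarrow> real \<Rightarrow> real \<Rightarrow> real" where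
  "Tq t c0 c1 c2 z0 z1 z2 = c0 * W t z0 z1 z2 0 + c1 * W t z0 z1 z2 1 + c2 * W t z0 z1 z2 2"

lemma Tq_expand: "Tq t c0 c1 c2 z0 z1 z2 =
  c0 * (z0^2 * ps t 0 + 2*z0*z1*ps t 1 + (2*z0*z2 + z1^2)*ps t 2 + 2*z1*z2*ps t 3 + z2^2 * ps t 4)
 + c1 * (z0^2 * ps t 1 + 2*z0*z1*ps t 2 + (2*z0*z2 + z1^2)*ps t 3 + 2*z1*z2*ps t 4 + z2^2 * ps t 5)
 + c2 * (z0^2 * ps t 2 + 2*z0*z1*ps t 3 + (2*z0*z2 + z1^2)*ps t 4 + 2*z1*z2*ps t 5 + z2^2 * ps t 6)"
  by (simp add: Tq_def W_def numeral_eq_Suc)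

lemma GA1: "Tq t (t^2+4*t+7) ((t+1)^2) (-(t+2)) z0 z1 z2
   = (t^2+3*t+9) * ((z0+z2)^2 + (z1+(t+1)*z2)^2 + z2^2)"
  by (simp add: Tq_expand ps_vals; algebra)

lemma GA2: "Tq t 1 1 1 z0 z1 z2
   = (t^2+3*t+9) * ((z0+(t+1)*z1+(t^2+2*t+3)*z2)^2 + (-z1-t*z2)^2 + (z1+(t+1)*z2)^2)"
  by (simp add: Tq_expand ps_vals; algebra)

lemma GA3: "Tq t (1-t) (-(t^2+2*t+2)) (t+1) z0 z1 z2
   = (t^2+3*t+9) * ((z0-z1+2*z2)^2 + z2^2 + (t*z2+z1)^2)"
  by (simp add: Tq_expand ps_vals; algebra)

definition QB :: "real \<Rightarrow> real \<Rightarrow> real \<Rightarrow> real \<Rightarrow> real" where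
  "QB t x y w = 2*(x^2+y^2-x*y) + 2*(t+2)*x*w - 2*y*w + (t^2+3*t+5)*w^2"

lemma GB1: "Tq t (t^2+3*t+6) (t^2+t+3) (-t) z0 z1 z2
   = (t^2+3*t+9) * QB t (z0+2*z2) z2 (z1+(t+1)*z2)"
  by (simp add: Tq_expand ps_vals QB_def; algebra)

lemma GB2: "Tq t (-t) (-(t^2+3*t+3)) (t+3) z0 z1 z2
   = (t^2+3*t+9) * QB t (z0+t*z1+(t^2+t+2)*z2) (-z1-(t+1)*z2) (-z1-t*z2)"
  by (simp add: Tq_expand ps_vals QB_def; algebra)

lemma GB3: "Tq t (t^2+4*t+12) (2*t) (-3) z0 z1 z2
   = (t^2+3*t+9) * QB t (z0+(t+2)*z2) (z1+t*z2) (-z2)"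
  by (simp add: Tq_expand ps_vals QB_def; algebra)

lemma L_th: "Tq t c0 c1 c2 0 1 0 - Tq t c0 c1 c2 1 0 0 =
   (t^2+2*t+3)*c0 + (t^3+3*t^2+8*t+3)*c1 + (t^4+4*t^3+13*t^2+14*t+12)*c2"
  by (simp add: Tq_expand ps_vals; algebra)
lemma L_thth: "Tq t c0 c1 c2 1 (t+1) (-1) - Tq t c0 c1 c2 1 0 0 =
   (t^2+4*t+6)*c0 - (t^2+5*t+12)*c1 + (t^2+4*t+15)*c2"
  by (simp add: Tq_expand ps_vals; algebra)
lemma L_thp: "Tq t c0 c1 c2 (-2) (-(t+1)) 1 - Tq t c0 c1 c2 1 0 0 =
   (t^2+2*t+3)*c0 - (t^2+4*t+6)*c1 + (2*t+3)*c2"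
  by (simp add: Tq_expand ps_vals; algebra)
lemma L_thi: "Tq t c0 c1 c2 (-(t+3)) (-t) 1 - Tq t c0 c1 c2 1 0 0 =
   (t^2+4*t+6)*c0 - (2*t+3)*c1 - (t^2+2*t+3)*c2"
  by (simp add: Tq_expand ps_vals; algebra)
lemma L_thpp: "Tq t c0 c1 c2 (t+2) t (-1) - Tq t c0 c1 c2 1 0 0 =
   (t^2+2*t+3)*c0 + (3-t)*c1 + (2*t+3)*c2"
  by (simp add: Tq_expand ps_vals; algebra)
lemma L_thpi: "Tq t c0 c1 c2 (-1) (-1) 0 - Tq t c0 c1 c2 1 0 0 =
   (t^2+4*t+6)*c0 + (t^3+5*t^2+13*t+15)*c1 + (t^4+6*t^3+20*t^2+34*t+24)*c2"
  by (simp add: Tq_expand ps_vals; algebra)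

abbreviation "Lth t c0 c1 c2 \<equiv> (t^2+2*t+3)*c0 + (t^3+3*t^2+8*t+3)*c1 + (t^4+4*t^3+13*t^2+14*t+12)*c2"
abbreviation "Lthth t c0 c1 c2 \<equiv> (t^2+4*t+6)*c0 - (t^2+5*t+12)*c1 + (t^2+4*t+15)*c2"
abbreviation "Lthp t c0 c1 c2 \<equiv> (t^2+2*t+3)*c0 - (t^2+4*t+6)*c1 + (2*t+3)*c2"
abbreviation "Lthi t c0 c1 c2 \<equiv> (t^2+4*t+6)*c0 - (2*t+3)*c1 - (t^2+2*t+3)*c2"
abbreviation "Lthpp t c0 c1 c2 \<equiv> (t^2+2*t+3)*c0 + (3-t)*c1 + (2*t+3)*c2"
abbreviation "Lthpi t c0 c1 c2 \<equiv> (t^2+4*t+6)*c0 + (t^3+5*t^2+13*t+15)*c1 + (t^4+6*t^3+20*t^2+34*t+24)*c2"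
abbreviation "al1 t c0 c1 c2 \<equiv> (t^2+3*t+3)*c0 - 2*t*c1 - (t^2+t+3)*c2"
abbreviation "al2 t c0 c1 c2 \<equiv> (t^2+3*t+3)*c0 + (t^3+4*t^2+10*t+9)*c1 + (t^4+5*t^3+16*t^2+23*t+15)*c2"
abbreviation "al3 t c0 c1 c2 \<equiv> (t^2+3*t+3)*c0 - (t^2+5*t+9)*c1 + (2*t+6)*c2"

lemma dec_ear1: "(t^2+3*t+9) * (Tq t c0 c1 c2 z0 z1 z2 - Tq t c0 c1 c2 1 0 0) =
   Lthp t c0 c1 c2 * (Tq t (t^2+4*t+7) ((t+1)^2) (-(t+2)) z0 z1 z2 - Tq t (t^2+4*t+7) ((t+1)^2) (-(t+2)) 1 0 0)
 + (- al3 t c0 c1 c2) * (Tq t (t^2+3*t+6) (t^2+t+3) (-t) z0 z1 z2 - Tq t (t^2+3*t+6) (t^2+t+3) (-t) 1 0 0)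
 + Lthth t c0 c1 c2 * (Tq t 1 1 1 z0 z1 z2 - Tq t 1 1 1 1 0 0)"
  by (simp add: Tq_expand ps_vals; algebra)

lemma dec_ear2: "(t^2+3*t+9) * (Tq t c0 c1 c2 z0 z1 z2 - Tq t c0 c1 c2 1 0 0) =
   Lthpp t c0 c1 c2 * (Tq t 1 1 1 z0 z1 z2 - Tq t 1 1 1 1 0 0)
 + (- al1 t c0 c1 c2) * (Tq t (-t) (-(t^2+3*t+3)) (t+3) z0 z1 z2 - Tq t (-t) (-(t^2+3*t+3)) (t+3) 1 0 0)
 + Lthi t c0 c1 c2 * (Tq t (1-t) (-(t^2+2*t+2)) (t+1) z0 z1 z2 - Tq t (1-t) (-(t^2+2*t+2)) (t+1) 1 0 0)"
  by (simp add: Tq_expand ps_vals; algebra)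

lemma dec_ear3: "(t^2+3*t+9) * (Tq t c0 c1 c2 z0 z1 z2 - Tq t c0 c1 c2 1 0 0) =
   Lth t c0 c1 c2 * (Tq t (1-t) (-(t^2+2*t+2)) (t+1) z0 z1 z2 - Tq t (1-t) (-(t^2+2*t+2)) (t+1) 1 0 0)
 + (- al2 t c0 c1 c2) * (Tq t (t^2+4*t+12) (2*t) (-3) z0 z1 z2 - Tq t (t^2+4*t+12) (2*t) (-3) 1 0 0)
 + Lthpi t c0 c1 c2 * (Tq t (t^2+4*t+7) ((t+1)^2) (-(t+2)) z0 z1 z2 - Tq t (t^2+4*t+7) ((t+1)^2) (-(t+2)) 1 0 0)"
  by (simp add: Tq_expand ps_vals; algebra)

lemma dec_center: "(t^2+3*t+9) * (t^2+3*t+3) * (Tq t c0 c1 c2 z0 z1 z2 - Tq t c0 c1 c2 1 0 0) =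
   al1 t c0 c1 c2 * (Tq t (t^2+4*t+7) ((t+1)^2) (-(t+2)) z0 z1 z2 - Tq t (t^2+4*t+7) ((t+1)^2) (-(t+2)) 1 0 0)
 + al2 t c0 c1 c2 * (Tq t 1 1 1 z0 z1 z2 - Tq t 1 1 1 1 0 0)
 + al3 t c0 c1 c2 * (Tq t (1-t) (-(t^2+2*t+2)) (t+1) z0 z1 z2 - Tq t (1-t) (-(t^2+2*t+2)) (t+1) 1 0 0)"
  by (simp add: Tq_expand ps_vals; algebra)

lemma sq_ge1: "(x::real) \<in> \<int> \<Longrightarrow> x \<noteq> 0 \<Longrightarrow> x^2 \<ge> 1"
proof -
  assume "x \<in> \<int>" "x \<noteq> 0"
  then have "\<bar>x\<bar> \<ge> 1" by (rule Ints_nonzero_abs_ge1)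
  then have "\<bar>x\<bar> * \<bar>x\<bar> \<ge> 1 * 1" by (intro mult_mono) auto
  then show ?thesis by (simp add: power2_eq_square)
qed

lemma sos3_ge1:
  fixes x y w :: real
  assumes "x \<in> \<int>" "y \<in> \<int>" "w \<in> \<int>" "\<not> (x = 0 \<and> y = 0 \<and> w = 0)"
  shows "x^2 + y^2 + w^2 \<ge> 1"
proof -
  have "x^2 \<ge> 0" "y^2 \<ge> 0" "w^2 \<ge> 0" by auto
  then show ?thesis using assms sq_ge1[of x] sq_ge1[of y] sq_ge1[of w] by linarith
qed

lemma QB_ge2:
  fixes x y w t :: real
  assumes "x \<in> \<int>" "y \<in> \<int>" "w \<in> \<int>" "\<not> (x = 0 \<and> y = 0 \<and> w = 0)"
  shows "QB t x y w \<ge> 2"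
proof (cases "w = 0")
  case True
  have "QB t x y w = x^2 + y^2 + (x-y)^2" using True by (simp add: QB_def power2_eq_square algebra_simps)
  moreover have "x - y \<in> \<int>" using assms by auto
  moreover have "x^2 \<ge> 0" "y^2 \<ge> 0" "(x-y)^2 \<ge> 0" by auto
  ultimately show ?thesis using assms True sq_ge1[of x] sq_ge1[of y] sq_ge1[of "x-y"] by force
next
  case False
  have id: "QB t x y w = 2*(x - y/2 + (t+2)*w/2)^2 + (3/2)*(y + t*w/3)^2 + ((t^2+3*t+9)/3)*w^2"
    by (simp add: QB_def power2_eq_square field_simps)
  have w1: "w^2 \<ge> 1" using sq_ge1[of w] assms False by auto
  have D: "(t^2+3*t+9)/3 \<ge> 2"
  proof -
    have "(t + 3/2)^2 \<ge> 0" by auto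
    then have "t^2+3*t+9 \<ge> 6" by (simp add: power2_eq_square algebra_simps)
    then show ?thesis by simp
  qed
  have "((t^2+3*t+9)/3)*w^2 \<ge> 2 * 1" using D w1 by (intro mult_mono) auto
  moreover have "2*(x - y/2 + (t+2)*w/2)^2 \<ge> 0" "(3/2)*(y + t*w/3)^2 \<ge> 0" by auto
  ultimately show ?thesis unfolding id by linarith
qed

lemma D_pos: "(t::real)^2+3*t+9 > 0"
proof -
  have "(t + 3/2)^2 \<ge> 0" by auto
  then show ?thesis by (simp add: power2_eq_square algebra_simps)
qed

lemma E_pos: "(t::real)^2+3*t+3 > 0"
proof -
  have "(t + 3/2)^2 \<ge> 0" by auto
  then show ?thesis by (simp add: power2_eq_square algebra_simps)
qed

lemma Dmul_ge: "(S::real) \<ge> 1 \<Longrightarrow> X = D * S \<Longrightarrow> Y = D \<Longrightarrow> D > 0 \<Longrightarrow> X - Y \<ge> 0"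
proof -
  assume "S \<ge> 1" "X = D * S" "Y = D" "D > 0"
  then have "D * 1 \<le> D * S" by (intro mult_left_mono) auto
  then show ?thesis using `X = D * S` `Y = D` by simp
qed

lemma GA1_ge: assumes "t \<in> \<int>" "z0 \<in> \<int>" "z1 \<in> \<int>" "z2 \<in> \<int>" "\<not> (z0 = 0 \<and> z1 = 0 \<and> z2 = 0)"
  shows "Tq t (t^2+4*t+7) ((t+1)^2) (-(t+2)) z0 z1 z2 - Tq t (t^2+4*t+7) ((t+1)^2) (-(t+2)) 1 0 0 \<ge> 0"
proof (rule Dmul_ge[where D="t^2+3*t+9"])
  show "Tq t (t^2+4*t+7) ((t+1)^2) (-(t+2)) z0 z1 z2 = (t^2+3*t+9) * ((z0+z2)^2 + (z1+(t+1)*z2)^2 + (z2)^2)" by (rule GA1)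
  show "Tq t (t^2+4*t+7) ((t+1)^2) (-(t+2)) 1 0 0 = t^2+3*t+9" by (simp only: GA1) simp
  show "(z0+z2)^2 + (z1+(t+1)*z2)^2 + (z2)^2 \<ge> 1"
  proof (rule sos3_ge1)
    show "\<not> (z0+z2 = 0 \<and> z1+(t+1)*z2 = 0 \<and> z2 = 0)"
    proof
      assume h: "z0+z2 = 0 \<and> z1+(t+1)*z2 = 0 \<and> z2 = 0"
      then have "z2 = 0" by (simp add: algebra_simps)
      then show False using h assms(5) by (auto simp: algebra_simps)
    qed
  qed (use assms in auto)
qed (rule D_pos)

lemma GA2_ge: assumes "t \<in> \<int>" "z0 \<in> \<int>" "z1 \<in> \<int>" "z2 \<in> \<int>" "\<not> (z0 = 0 \<and> z1 = 0 \<and> z2 = 0)"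
  shows "Tq t 1 1 1 z0 z1 z2 - Tq t 1 1 1 1 0 0 \<ge> 0"
proof (rule Dmul_ge[where D="t^2+3*t+9"])
  show "Tq t 1 1 1 z0 z1 z2 = (t^2+3*t+9) * ((z0+(t+1)*z1+(t^2+2*t+3)*z2)^2 + (-z1-t*z2)^2 + (z1+(t+1)*z2)^2)" by (rule GA2)
  show "Tq t 1 1 1 1 0 0 = t^2+3*t+9" by (simp only: GA2) simp
  show "(z0+(t+1)*z1+(t^2+2*t+3)*z2)^2 + (-z1-t*z2)^2 + (z1+(t+1)*z2)^2 \<ge> 1"
  proof (rule sos3_ge1)
    show "\<not> (z0+(t+1)*z1+(t^2+2*t+3)*z2 = 0 \<and> -z1-t*z2 = 0 \<and> z1+(t+1)*z2 = 0)"
    proof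
      assume h: "z0+(t+1)*z1+(t^2+2*t+3)*z2 = 0 \<and> -z1-t*z2 = 0 \<and> z1+(t+1)*z2 = 0"
      then have "z2 = 0" by (simp add: algebra_simps)
      then show False using h assms(5) by (auto simp: algebra_simps)
    qed
  qed (use assms in auto)
qed (rule D_pos)

lemma GA3_ge: assumes "t \<in> \<int>" "z0 \<in> \<int>" "z1 \<in> \<int>" "z2 \<in> \<int>" "\<not> (z0 = 0 \<and> z1 = 0 \<and> z2 = 0)"
  shows "Tq t (1-t) (-(t^2+2*t+2)) (t+1) z0 z1 z2 - Tq t (1-t) (-(t^2+2*t+2)) (t+1) 1 0 0 \<ge> 0"
proof (rule Dmul_ge[where D="t^2+3*t+9"])
  show "Tq t (1-t) (-(t^2+2*t+2)) (t+1) z0 z1 z2 = (t^2+3*t+9) * ((z0-z1+2*z2)^2 + (z2)^2 + (t*z2+z1)^2)" by (rule GA3)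
  show "Tq t (1-t) (-(t^2+2*t+2)) (t+1) 1 0 0 = t^2+3*t+9" by (simp only: GA3) simp
  show "(z0-z1+2*z2)^2 + (z2)^2 + (t*z2+z1)^2 \<ge> 1"
  proof (rule sos3_ge1)
    show "\<not> (z0-z1+2*z2 = 0 \<and> z2 = 0 \<and> t*z2+z1 = 0)"
    proof
      assume h: "z0-z1+2*z2 = 0 \<and> z2 = 0 \<and> t*z2+z1 = 0"
      then have "z2 = 0" by (simp add: algebra_simps)
      then show False using h assms(5) by (auto simp: algebra_simps)
    qed
  qed (use assms in auto)
qed (rule D_pos)

lemma GB1_ge: assumes "t \<in> \<int>" "z0 \<in> \<int>" "z1 \<in> \<int>" "z2 \<in> \<int>" "\<not> (z0 = 0 \<and> z1 = 0 \<and> z2 = 0)"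
  shows "Tq t (t^2+3*t+6) (t^2+t+3) (-t) z0 z1 z2 - Tq t (t^2+3*t+6) (t^2+t+3) (-t) 1 0 0 \<ge> 0"
proof -
  have e1: "Tq t (t^2+3*t+6) (t^2+t+3) (-t) z0 z1 z2 = (t^2+3*t+9) * QB t (z0+2*z2) (z2) (z1+(t+1)*z2)" by (rule GB1)
  have e2: "Tq t (t^2+3*t+6) (t^2+t+3) (-t) 1 0 0 = (t^2+3*t+9) * 2" by (simp only: GB1) (simp add: QB_def)
  have "QB t (z0+2*z2) (z2) (z1+(t+1)*z2) \<ge> 2"
  proof (rule QB_ge2)
    show "\<not> (z0+2*z2 = 0 \<and> z2 = 0 \<and> z1+(t+1)*z2 = 0)"
    proof
      assume h: "z0+2*z2 = 0 \<and> z2 = 0 \<and> z1+(t+1)*z2 = 0"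
      then have "z2 = 0" by (simp add: algebra_simps)
      then show False using h assms(5) by (auto simp: algebra_simps)
    qed
  qed (use assms in auto)
  then have "(t^2+3*t+9) * 2 \<le> (t^2+3*t+9) * QB t (z0+2*z2) (z2) (z1+(t+1)*z2)"
    using D_pos[of t] by (intro mult_left_mono) auto
  then show ?thesis unfolding e1 e2 by simp
qed

lemma GB2_ge: assumes "t \<in> \<int>" "z0 \<in> \<int>" "z1 \<in> \<int>" "z2 \<in> \<int>" "\<not> (z0 = 0 \<and> z1 = 0 \<and> z2 = 0)"
  shows "Tq t (-t) (-(t^2+3*t+3)) (t+3) z0 z1 z2 - Tq t (-t) (-(t^2+3*t+3)) (t+3) 1 0 0 \<ge> 0"
proof -
  have e1: "Tq t (-t) (-(t^2+3*t+3)) (t+3) z0 z1 z2 = (t^2+3*t+9) * QB t (z0+t*z1+(t^2+t+2)*z2) (-z1-(t+1)*z2) (-z1-t*z2)" by (rule GB2)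
  have e2: "Tq t (-t) (-(t^2+3*t+3)) (t+3) 1 0 0 = (t^2+3*t+9) * 2" by (simp only: GB2) (simp add: QB_def)
  have "QB t (z0+t*z1+(t^2+t+2)*z2) (-z1-(t+1)*z2) (-z1-t*z2) \<ge> 2"
  proof (rule QB_ge2)
    show "\<not> (z0+t*z1+(t^2+t+2)*z2 = 0 \<and> -z1-(t+1)*z2 = 0 \<and> -z1-t*z2 = 0)"
    proof
      assume h: "z0+t*z1+(t^2+t+2)*z2 = 0 \<and> -z1-(t+1)*z2 = 0 \<and> -z1-t*z2 = 0"
      then have "z2 = 0" by (simp add: algebra_simps)
      then show False using h assms(5) by (auto simp: algebra_simps)
    qed
  qed (use assms in auto)
  then have "(t^2+3*t+9) * 2 \<le> (t^2+3*t+9) * QB t (z0+t*z1+(t^2+t+2)*z2) (-z1-(t+1)*z2) (-z1-t*z2)"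
    using D_pos[of t] by (intro mult_left_mono) auto
  then show ?thesis unfolding e1 e2 by simp
qed

lemma GB3_ge: assumes "t \<in> \<int>" "z0 \<in> \<int>" "z1 \<in> \<int>" "z2 \<in> \<int>" "\<not> (z0 = 0 \<and> z1 = 0 \<and> z2 = 0)"
  shows "Tq t (t^2+4*t+12) (2*t) (-3) z0 z1 z2 - Tq t (t^2+4*t+12) (2*t) (-3) 1 0 0 \<ge> 0"
proof -
  have e1: "Tq t (t^2+4*t+12) (2*t) (-3) z0 z1 z2 = (t^2+3*t+9) * QB t (z0+(t+2)*z2) (z1+t*z2) (-z2)" by (rule GB3)
  have e2: "Tq t (t^2+4*t+12) (2*t) (-3) 1 0 0 = (t^2+3*t+9) * 2" by (simp only: GB3) (simp add: QB_def)
  have "QB t (z0+(t+2)*z2) (z1+t*z2) (-z2) \<ge> 2"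
  proof (rule QB_ge2)
    show "\<not> (z0+(t+2)*z2 = 0 \<and> z1+t*z2 = 0 \<and> -z2 = 0)"
    proof
      assume h: "z0+(t+2)*z2 = 0 \<and> z1+t*z2 = 0 \<and> -z2 = 0"
      then have "z2 = 0" by (simp add: algebra_simps)
      then show False using h assms(5) by (auto simp: algebra_simps)
    qed
  qed (use assms in auto)
  then have "(t^2+3*t+9) * 2 \<le> (t^2+3*t+9) * QB t (z0+(t+2)*z2) (z1+t*z2) (-z2)"
    using D_pos[of t] by (intro mult_left_mono) auto
  then show ?thesis unfolding e1 e2 by simp
qed

lemma pos_from_mult: "(D::real) > 0 \<Longrightarrow> D * X = Y \<Longrightarrow> Y \<ge> 0 \<Longrightarrow> X \<ge> 0"
  by (metis zero_le_mult_iff not_less)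

lemma core:
  fixes t c0 c1 c2 z0 z1 z2 :: real
  assumes Z: "t \<in> \<int>" "z0 \<in> \<int>" "z1 \<in> \<int>" "z2 \<in> \<int>" "\<not> (z0 = 0 \<and> z1 = 0 \<and> z2 = 0)"
  and h1: "Tq t c0 c1 c2 0 1 0 \<ge> Tq t c0 c1 c2 1 0 0"
  and h2: "Tq t c0 c1 c2 1 (t+1) (-1) \<ge> Tq t c0 c1 c2 1 0 0"
  and h3: "Tq t c0 c1 c2 (-2) (-(t+1)) 1 \<ge> Tq t c0 c1 c2 1 0 0"
  and h4: "Tq t c0 c1 c2 (-(t+3)) (-t) 1 \<ge> Tq t c0 c1 c2 1 0 0"
  and h5: "Tq t c0 c1 c2 (t+2) t (-1) \<ge> Tq t c0 c1 c2 1 0 0"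
  and h6: "Tq t c0 c1 c2 (-1) (-1) 0 \<ge> Tq t c0 c1 c2 1 0 0"
  shows "Tq t c0 c1 c2 z0 z1 z2 \<ge> Tq t c0 c1 c2 1 0 0"
proof -
  have l1: "Lth t c0 c1 c2 \<ge> 0" using h1 L_th[of t c0 c1 c2] by linarith
  have l2: "Lthth t c0 c1 c2 \<ge> 0" using h2 L_thth[of t c0 c1 c2] by linarith
  have l3: "Lthp t c0 c1 c2 \<ge> 0" using h3 L_thp[of t c0 c1 c2] by linarith
  have l4: "Lthi t c0 c1 c2 \<ge> 0" using h4 L_thi[of t c0 c1 c2] by linarith
  have l5: "Lthpp t c0 c1 c2 \<ge> 0" using h5 L_thpp[of t c0 c1 c2] by linarith
  have l6: "Lthpi t c0 c1 c2 \<ge> 0" using h6 L_thpi[of t c0 c1 c2] by linarith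
  note A1 = GA1_ge[OF Z] and A2 = GA2_ge[OF Z] and A3 = GA3_ge[OF Z]
  note B1 = GB1_ge[OF Z] and B2 = GB2_ge[OF Z] and B3 = GB3_ge[OF Z]
  have "Tq t c0 c1 c2 z0 z1 z2 - Tq t c0 c1 c2 1 0 0 \<ge> 0"
  proof (cases "al3 t c0 c1 c2 \<le> 0")
    case True
    show ?thesis
      using mult_nonneg_nonneg[OF l3 A1] mult_nonneg_nonneg[OF _ B1, of "- al3 t c0 c1 c2"]
        mult_nonneg_nonneg[OF l2 A2] True
      by (intro pos_from_mult[OF D_pos dec_ear1]) linarith
  next
    case n3: False
    show ?thesis
    proof (cases "al1 t c0 c1 c2 \<le> 0")
      case True
      show ?thesis
        using mult_nonneg_nonneg[OF l5 A2] mult_nonneg_nonneg[OF _ B2, of "- al1 t c0 c1 c2"]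
          mult_nonneg_nonneg[OF l4 A3] True
        by (intro pos_from_mult[OF D_pos dec_ear2]) linarith
    next
      case n1: False
      show ?thesis
      proof (cases "al2 t c0 c1 c2 \<le> 0")
        case True
        show ?thesis
          using mult_nonneg_nonneg[OF l1 A3] mult_nonneg_nonneg[OF _ B3, of "- al2 t c0 c1 c2"]
            mult_nonneg_nonneg[OF l6 A1] True
          by (intro pos_from_mult[OF D_pos dec_ear3]) linarith
      next
        case n2: False
        have DE: "(t^2+3*t+9) * (t^2+3*t+3) > 0" using D_pos[of t] E_pos[of t] by simp
        show ?thesis
          using mult_nonneg_nonneg[OF _ A1, of "al1 t c0 c1 c2"] mult_nonneg_nonneg[OF _ A2, of "al2 t c0 c1 c2"]
            mult_nonneg_nonneg[OF _ A3, of "al3 t c0 c1 c2"] n1 n2 n3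
          by (intro pos_from_mult[OF DE dec_center]) linarith
      qed
    qed
  qed
  then show ?thesis by simp
qed


locale sc =
  fixes t :: int and \<theta> :: real
  assumes root: "poly (simplest_cubic t) \<theta> = 0"
begin

abbreviation "tr \<equiv> real_of_int t"

lemma cub: "\<theta>^3 = tr*\<theta>^2 + (tr+3)*\<theta> + 1"
  using root by (simp add: simplest_cubic_def algebra_simps power2_eq_square power3_eq_cube)

lemma th_ne0: "\<theta> \<noteq> 0" using cub by auto
lemma th_ne1: "1 + \<theta> \<noteq> 0"
proof
  assume "1 + \<theta> = 0" then have "\<theta> = -1" by simp
  with cub show False by simp
qed

definition r :: "nat \<Rightarrow> real" where
  "r j = (if j = 0 then \<theta> else if j = 1 then -1/(1+\<theta>) else -(1+\<theta>)/\<theta>)"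

lemma r0: "r 0 = \<theta>" and r1: "r 1 = -1/(1+\<theta>)" and r2: "r 2 = -(1+\<theta>)/\<theta>"
  by (simp_all add: r_def)

lemma h1: "(1+\<theta>) * r 1 = -1" using th_ne1 by (simp add: r_def field_simps)
lemma h2: "\<theta> * r 2 = -(1+\<theta>)" using th_ne0 by (simp add: r_def field_simps)

lemma r_cub: "j < 3 \<Longrightarrow> (r j)^3 = tr*(r j)^2 + (tr+3)*(r j) + 1"
proof -
  assume "j < 3"
  then consider "j = 0" | "j = 1" | "j = 2" by linarith
  then show ?thesis
  proof cases
    case 1 then show ?thesis using cub by (simp add: r_def)
  next
    case 2
    show ?thesis unfolding 2 using cub h1 by algebra
  next
    case 3
    show ?thesis unfolding 3 using cub h2 by algebra
  qed
qed

lemma no_circle: "(x::real)^2 + x + 1 \<noteq> 0"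
proof -
  have "(x + 1/2)^2 \<ge> 0" by simp
  then have "x^2 + x + 1 > 0" by (simp add: power2_eq_square algebra_simps)
  then show ?thesis by simp
qed

lemma r_distinct: "r 0 \<noteq> r 1" "r 0 \<noteq> r 2" "r 1 \<noteq> r 2"
proof -
  have a: "1 + \<theta> \<noteq> 0" "\<theta> \<noteq> 0" by (rule th_ne1, rule th_ne0)
  show "r 0 \<noteq> r 1"
  proof
    assume "r 0 = r 1"
    then have "\<theta> * (1+\<theta>) = -1" using a by (simp add: r_def field_simps)
    then have "\<theta>^2 + \<theta> + 1 = 0" by (simp add: algebra_simps power2_eq_square)
    then show False using no_circle by blast
  qed
  show "r 0 \<noteq> r 2"
  proof
    assume "r 0 = r 2"
    then have "\<theta> * \<theta> = -(1+\<theta>)" using a by (simp add: r_def field_simps)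
    then have "\<theta>^2 + \<theta> + 1 = 0" by (simp add: algebra_simps power2_eq_square)
    then show False using no_circle by blast
  qed
  show "r 1 \<noteq> r 2"
  proof
    assume "r 1 = r 2"
    then have "\<theta> = (1+\<theta>)*(1+\<theta>)" using a by (simp add: r_def field_simps)
    then have "\<theta>^2 + \<theta> + 1 = 0" by (simp add: algebra_simps power2_eq_square)
    then show False using no_circle by blast
  qed
qed

lemma vieta: "r 0 + r 1 + r 2 = tr" "r 0 * r 1 + r 0 * r 2 + r 1 * r 2 = -(tr+3)" "r 0 * r 1 * r 2 = 1"
proof -
  have a: "1 + \<theta> \<noteq> 0" "\<theta> \<noteq> 0" by (rule th_ne1, rule th_ne0)
  have r0: "r 0 = \<theta>" by (simp add: r_def)
  show "r 0 + r 1 + r 2 = tr" unfolding r0 using cub h1 h2 by algebra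
  show "r 0 * r 1 + r 0 * r 2 + r 1 * r 2 = -(tr+3)" unfolding r0 using cub h1 h2 by algebra
  show "r 0 * r 1 * r 2 = 1" unfolding r0 using h1 h2 a by algebra
qed

lemma r_rec: "j < 3 \<Longrightarrow> r j ^ (n+3) = tr * r j ^ (n+2) + (tr+3) * r j ^ (n+1) + r j ^ n"
proof -
  assume "j < 3"
  from r_cub[OF this] have "r j ^ n * (r j)^3 = r j ^ n * (tr*(r j)^2 + (tr+3)*(r j) + 1)" by simp
  then show ?thesis by (simp add: algebra_simps power2_eq_square power3_eq_cube power_add)
qed

lemma psum3: "(r 0 ^ n + r 1 ^ n + r 2 ^ n = ps tr n) \<and>
   (r 0 ^ (n+1) + r 1 ^ (n+1) + r 2 ^ (n+1) = ps tr (n+1)) \<and>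
   (r 0 ^ (n+2) + r 1 ^ (n+2) + r 2 ^ (n+2) = ps tr (n+2))"
proof (induction n)
  case 0
  have "(r 0 + r 1 + r 2)^2 = r 0^2 + r 1^2 + r 2^2 + 2*(r 0 * r 1 + r 0 * r 2 + r 1 * r 2)"
    by (simp add: power2_eq_square algebra_simps)
  then have "r 0^2 + r 1^2 + r 2^2 = tr^2 + 2*tr + 6" unfolding vieta by (simp add: algebra_simps)
  then show ?case using vieta(1) by (simp add: ps_vals power2_eq_square)
next
  case (Suc n)
  have e: "ps tr (Suc n + 2) = tr * ps tr (n+2) + (tr+3) * ps tr (n+1) + ps tr n"
    by (simp add: numeral_eq_Suc)
  have "r 0 ^ (n+3) + r 1 ^ (n+3) + r 2 ^ (n+3) = tr * (r 0 ^ (n+2) + r 1 ^ (n+2) + r 2 ^ (n+2))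
     + (tr+3) * (r 0 ^ (n+1) + r 1 ^ (n+1) + r 2 ^ (n+1)) + (r 0 ^ n + r 1 ^ n + r 2 ^ n)"
    using r_rec[of 0 n] r_rec[of 1 n] r_rec[of 2 n] by (simp add: algebra_simps)
  then show ?case using Suc e by (simp add: numeral_eq_Suc)
qed

lemma psum: "r 0 ^ n + r 1 ^ n + r 2 ^ n = ps tr n"
  using psum3 by blast

end

type_synonym trip = "real \<times> real \<times> real"

definition elr :: "real \<Rightarrow> trip \<Rightarrow> real" where
  "elr x c = (case c of (c0,c1,c2) \<Rightarrow> c0 + c1*x + c2*x^2)"

definition mulc :: "real \<Rightarrow> trip \<Rightarrow> trip \<Rightarrow> trip" where
  "mulc t c d = (case c of (c0,c1,c2) \<Rightarrow> case d of (d0,d1,d2) \<Rightarrow>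
     (c0*d0 + (c1*d2+c2*d1) + t*(c2*d2),
      (c0*d1+c1*d0) + (t+3)*(c1*d2+c2*d1) + (t^2+3*t+1)*(c2*d2),
      (c0*d2+c1*d1+c2*d0) + t*(c1*d2+c2*d1) + (t^2+t+3)*(c2*d2)))"

definition isQ :: "trip \<Rightarrow> bool" where
  "isQ c = (case c of (c0,c1,c2) \<Rightarrow> c0 \<in> \<rat> \<and> c1 \<in> \<rat> \<and> c2 \<in> \<rat>)"
definition isZ :: "trip \<Rightarrow> bool" where
  "isZ c = (case c of (c0,c1,c2) \<Rightarrow> c0 \<in> \<int> \<and> c1 \<in> \<int> \<and> c2 \<in> \<int>)"

lemma elr_mul:
  assumes "x^3 = t*x^2 + (t+3)*x + 1"
  shows "elr x c * elr x d = elr x (mulc t c d)"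
proof -
  obtain c0 c1 c2 where c: "c = (c0,c1,c2)" by (cases c) auto
  obtain d0 d1 d2 where d: "d = (d0,d1,d2)" by (cases d) auto
  show ?thesis unfolding c d elr_def mulc_def using assms by simp algebra
qed

lemma elr_add: "elr x (a0,a1,a2) + elr x (b0,b1,b2) = elr x (a0+b0,a1+b1,a2+b2)"
  by (simp add: elr_def algebra_simps)

lemma isQ_mul: "t \<in> \<int> \<Longrightarrow> isQ c \<Longrightarrow> isQ d \<Longrightarrow> isQ (mulc t c d)"
  by (cases c, cases d) (auto simp: isQ_def mulc_def Ints_subset_Rats[THEN subsetD])

lemma isZ_mul: "t \<in> \<int> \<Longrightarrow> isZ c \<Longrightarrow> isZ d \<Longrightarrow> isZ (mulc t c d)"
  by (cases c, cases d) (auto simp: isZ_def mulc_def)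

lemma isZ_isQ: "isZ c \<Longrightarrow> isQ c"
  by (cases c) (auto simp: isZ_def isQ_def Ints_subset_Rats[THEN subsetD])

context sc begin

abbreviation "el \<equiv> elr \<theta>"

lemma el_mul: "el c * el d = el (mulc tr c d)"
  by (rule elr_mul) (use cub in simp)

lemma r_mul: "j < 3 \<Longrightarrow> elr (r j) c * elr (r j) d = elr (r j) (mulc tr c d)"
  by (rule elr_mul) (use r_cub in simp)

lemma th_el: "\<theta> * el (c0,c1,c2) = el (c2, c0 + (tr+3)*c2, c1 + tr*c2)"
  unfolding elr_def using cub by simp algebra

lemma Q_adj_eq: "Q_adj \<theta> = {el c | c. isQ c}"
proof
  show "Q_adj \<theta> \<subseteq> {el c | c. isQ c}"
  proof
    fix x assume "x \<in> Q_adj \<theta>"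
    then obtain q where x: "x = poly (map_poly of_rat q) \<theta>" by (auto simp: Q_adj_def)
    have "\<exists>c. isQ c \<and> poly (map_poly of_rat q) \<theta> = el c"
    proof (induction q rule: pCons_induct)
      case 0
      show ?case by (rule exI[of _ "(0,0,0)"]) (simp add: isQ_def elr_def)
    next
      case (pCons a p)
      then obtain c0 c1 c2 where c: "isQ (c0,c1,c2)" "poly (map_poly of_rat p) \<theta> = el (c0,c1,c2)"
        by (metis prod_cases3)
      have "poly (map_poly of_rat (pCons a p)) \<theta> = of_rat a + \<theta> * el (c0,c1,c2)"
        by (simp add: map_poly_pCons c(2))
      also have "\<dots> = el (of_rat a + c2, c0 + (tr+3)*c2, c1 + tr*c2)"
        unfolding th_el by (simp add: elr_def)
      finally show ?case using c(1)
        by (intro exI[of _ "(of_rat a + c2, c0 + (tr+3)*c2, c1 + tr*c2)"])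
           (auto simp: isQ_def Ints_subset_Rats[THEN subsetD])
    qed
    then show "x \<in> {el c | c. isQ c}" using x by auto
  qed
next
  show "{el c | c. isQ c} \<subseteq> Q_adj \<theta>"
  proof
    fix x assume "x \<in> {el c | c. isQ c}"
    then obtain c0 c1 c2 where c: "isQ (c0,c1,c2)" "x = el (c0,c1,c2)" by auto
    then obtain q0 q1 q2 where q: "c0 = of_rat q0" "c1 = of_rat q1" "c2 = of_rat q2"
      by (auto simp: isQ_def elim!: Rats_cases)
    have "x = poly (map_poly of_rat [:q0,q1,q2:]) \<theta>"
      using c q by (simp add: map_poly_pCons elr_def algebra_simps power2_eq_square)
    then show "x \<in> Q_adj \<theta>" by (auto simp: Q_adj_def)
  qed
qed

lemma Z_adj_eq: "Z_adj \<theta> = {el c | c. isZ c}"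
proof
  show "Z_adj \<theta> \<subseteq> {el c | c. isZ c}"
  proof
    fix x assume "x \<in> Z_adj \<theta>"
    then obtain q where x: "x = poly (map_poly of_int q) \<theta>" by (auto simp: Z_adj_def)
    have "\<exists>c. isZ c \<and> poly (map_poly of_int q) \<theta> = el c"
    proof (induction q rule: pCons_induct)
      case 0
      show ?case by (rule exI[of _ "(0,0,0)"]) (simp add: isZ_def elr_def)
    next
      case (pCons a p)
      then obtain c0 c1 c2 where c: "isZ (c0,c1,c2)" "poly (map_poly of_int p) \<theta> = el (c0,c1,c2)"
        by (metis prod_cases3)
      have "poly (map_poly of_int (pCons a p)) \<theta> = of_int a + \<theta> * el (c0,c1,c2)"
        by (simp add: map_poly_pCons c(2))
      also have "\<dots> = el (of_int a + c2, c0 + (tr+3)*c2, c1 + tr*c2)"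
        unfolding th_el by (simp add: elr_def)
      finally show ?case using c(1)
        by (intro exI[of _ "(of_int a + c2, c0 + (tr+3)*c2, c1 + tr*c2)"])
           (auto simp: isZ_def)
    qed
    then show "x \<in> {el c | c. isZ c}" using x by auto
  qed
next
  show "{el c | c. isZ c} \<subseteq> Z_adj \<theta>"
  proof
    fix x assume "x \<in> {el c | c. isZ c}"
    then obtain c0 c1 c2 where c: "isZ (c0,c1,c2)" "x = el (c0,c1,c2)" by auto
    then obtain q0 q1 q2 where q: "c0 = of_int q0" "c1 = of_int q1" "c2 = of_int q2"
      by (auto simp: isZ_def elim!: Ints_cases)
    have "x = poly (map_poly of_int [:q0,q1,q2:]) \<theta>"
      using c q by (simp add: map_poly_pCons elr_def algebra_simps power2_eq_square)
    then show "x \<in> Z_adj \<theta>" by (auto simp: Z_adj_def)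
  qed
qed

end

context sc begin

lemma no_rat_root:
  assumes "s \<in> \<rat>" "s^3 - tr*s^2 - (tr+3)*s - 1 = 0"
  shows False
proof -
  have ai: "algebraic_int s"
  proof (rule algebraic_int.intros[of "[:-1, -(tr+3), -tr, 1:]"])
    show "lead_coeff [:-1, -(tr+3), -tr, 1:] = 1" by simp
    show "\<forall>i. coeff [:- 1, - (tr + 3), - tr, 1:] i \<in> \<int>"
    proof
      fix i :: nat
      show "coeff [:- 1, - (tr + 3), - tr, 1:] i \<in> \<int>"
        by (auto simp: coeff_pCons split: nat.split)
    qed
    show "poly [:- 1, - (tr + 3), - tr, 1:] s = 0"
      using assms(2) by (simp add: algebra_simps power2_eq_square power3_eq_cube)
  qed
  have "s \<in> \<int>" by (rule rational_algebraic_int_is_int[OF ai assms(1)])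
  then obtain m where m: "s = of_int m" by (auto elim: Ints_cases)
  have "real_of_int (m^3 - t*m^2 - (t+3)*m - 1) = 0" using assms(2) m by simp
  then have "m^3 - t*m^2 - (t+3)*m - 1 = 0" by (simp only: of_int_eq_0_iff)
  then have "m * (m^2 - t*m - (t+3)) = 1" by (simp add: algebra_simps power2_eq_square power3_eq_cube)
  then have "m = 1 \<or> m = -1" by (rule pos_zmult_eq_1_iff_lemma)
  then show False
  proof
    assume "m = 1"
    with `m^3 - t*m^2 - (t+3)*m - 1 = 0` have "2*t = -3" by simp
    then show False by presburger
  next
    assume "m = -1"
    with `m^3 - t*m^2 - (t+3)*m - 1 = 0` show False by simp
  qed
qed

lemma th_irr: "\<theta> \<notin> \<rat>"
  using no_rat_root[of \<theta>] cub by auto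

lemma indep:
  assumes "isQ (c0,c1,c2)" "el (c0,c1,c2) = 0"
  shows "c0 = 0 \<and> c1 = 0 \<and> c2 = 0"
proof -
  have Q: "c0 \<in> \<rat>" "c1 \<in> \<rat>" "c2 \<in> \<rat>" using assms(1) by (auto simp: isQ_def)
  have e: "c0 + c1*\<theta> + c2*\<theta>^2 = 0" using assms(2) by (simp add: elr_def)
  show ?thesis
  proof (cases "c2 = 0")
    case False
    define p where "p = -c1/c2"
    define q where "q = -c0/c2"
    have pq: "p \<in> \<rat>" "q \<in> \<rat>" using Q by (auto simp: p_def q_def)
    have sq: "\<theta>^2 = p*\<theta> + q" using e False by (simp add: p_def q_def field_simps)
    define k where "k = p^2 + q - tr*p - tr - 3"
    define m where "m = tr*q + 1 - p*q"
    have km: "k*\<theta> = m" unfolding k_def m_def using sq cub by algebra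
    show ?thesis
    proof (cases "k = 0")
      case False
      then have "\<theta> = m/k" using km by (simp add: field_simps)
      moreover have "m/k \<in> \<rat>" using pq by (simp add: k_def m_def)
      ultimately show ?thesis using th_irr by simp
    next
      case True
      then have m0: "m = 0" using km by simp
      have "(tr-p)^3 - tr*(tr-p)^2 - (tr+3)*(tr-p) - 1 = 0"
        using True m0 unfolding k_def m_def by algebra
      moreover have "tr - p \<in> \<rat>" using pq by simp
      ultimately show ?thesis using no_rat_root by blast
    qed
  next
    case c2: True
    show ?thesis
    proof (cases "c1 = 0")
      case False
      then have "\<theta> = -c0/c1" using e c2 by (simp add: field_simps)
      moreover have "-c0/c1 \<in> \<rat>" using Q by simp
      ultimately show ?thesis using th_irr by simp
    next
      case True then show ?thesis using e c2 by simp
    qed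
  qed
qed

lemma el_inj:
  assumes "isQ c" "isQ d" "el c = el d" shows "c = d"
proof -
  obtain c0 c1 c2 where c: "c = (c0,c1,c2)" by (cases c) auto
  obtain d0 d1 d2 where d: "d = (d0,d1,d2)" by (cases d) auto
  have "isQ (c0-d0, c1-d1, c2-d2)" using assms c d by (auto simp: isQ_def)
  moreover have "el (c0-d0, c1-d1, c2-d2) = 0" using assms(3) c d by (simp add: elr_def algebra_simps)
  ultimately show ?thesis using indep c d by fastforce
qed

abbreviation "KK \<equiv> Q_adj \<theta>"

definition co :: "real \<Rightarrow> trip" where "co x = (SOME c. isQ c \<and> el c = x)"

lemma co: "x \<in> KK \<Longrightarrow> isQ (co x) \<and> el (co x) = x"
  unfolding co_def Q_adj_eq by (rule someI_ex) auto

lemma co_eq: "isQ c \<Longrightarrow> co (el c) = c"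
proof -
  assume c: "isQ c"
  then have "el c \<in> KK" unfolding Q_adj_eq by blast
  from co[OF this] c show ?thesis using el_inj by blast
qed

lemma el_in_K: "isQ c \<Longrightarrow> el c \<in> KK" unfolding Q_adj_eq by blast

lemma K_add: "x \<in> KK \<Longrightarrow> y \<in> KK \<Longrightarrow> x + y \<in> KK \<and> co (x + y) =
   (case co x of (a0,a1,a2) \<Rightarrow> case co y of (b0,b1,b2) \<Rightarrow> (a0+b0,a1+b1,a2+b2))"
proof -
  assume x: "x \<in> KK" and y: "y \<in> KK"
  obtain a0 a1 a2 where a: "co x = (a0,a1,a2)" by (cases "co x") auto
  obtain b0 b1 b2 where b: "co y = (b0,b1,b2)" by (cases "co y") auto
  have q: "isQ (a0+b0,a1+b1,a2+b2)" using co[OF x] co[OF y] a b by (auto simp: isQ_def)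
  have "el (a0+b0,a1+b1,a2+b2) = el (a0,a1,a2) + el (b0,b1,b2)" by (simp add: elr_add)
  then have xy: "el (a0+b0,a1+b1,a2+b2) = x + y" using co[OF x] co[OF y] a b by simp
  have "x + y \<in> KK" using el_in_K[OF q] xy by simp
  moreover have "co (x + y) = (a0+b0,a1+b1,a2+b2)" using co_eq[OF q] xy by simp
  ultimately show ?thesis using a b by simp
qed

lemma K_mul: "x \<in> KK \<Longrightarrow> y \<in> KK \<Longrightarrow> x * y \<in> KK \<and> co (x * y) = mulc tr (co x) (co y)"
proof -
  assume x: "x \<in> KK" and y: "y \<in> KK"
  have q: "isQ (mulc tr (co x) (co y))" using co[OF x] co[OF y] by (intro isQ_mul) auto
  have xy: "el (mulc tr (co x) (co y)) = x * y" using co[OF x] co[OF y] el_mul[of "co x" "co y"] by simp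
  have "x * y \<in> KK" using el_in_K[OF q] xy by simp
  moreover have "co (x * y) = mulc tr (co x) (co y)" using co_eq[OF q] xy by simp
  ultimately show ?thesis by simp
qed

end

context sc begin

definition emb :: "nat \<Rightarrow> real \<Rightarrow> complex" where
  "emb j x = (if x \<in> KK then complex_of_real (elr (r j) (co x)) else 0)"

lemma one_K: "1 \<in> KK" and co_one: "co 1 = (1,0,0)"
proof -
  have q: "isQ (1,0,0)" by (simp add: isQ_def)
  have e: "el (1,0,0) = 1" by (simp add: elr_def)
  show "1 \<in> KK" using el_in_K[OF q] e by simp
  show "co 1 = (1,0,0)" using co_eq[OF q] e by simp
qed

lemma th_K: "\<theta> \<in> KK" and co_th: "co \<theta> = (0,1,0)"
proof -
  have q: "isQ (0,1,0)" by (simp add: isQ_def)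
  have e: "el (0,1,0) = \<theta>" by (simp add: elr_def)
  show "\<theta> \<in> KK" using el_in_K[OF q] e by simp
  show "co \<theta> = (0,1,0)" using co_eq[OF q] e by simp
qed

lemma rat_K: "q \<in> \<rat> \<Longrightarrow> q \<in> KK \<and> co q = (q,0,0)"
proof -
  assume "q \<in> \<rat>"
  then have qq: "isQ (q,0,0)" by (simp add: isQ_def)
  have e: "el (q,0,0) = q" by (simp add: elr_def)
  show ?thesis using el_in_K[OF qq] co_eq[OF qq] e by simp
qed

lemma emb_in: "j < 3 \<Longrightarrow> emb j \<in> embeddings KK"
proof -
  assume j: "j < 3"
  have "emb j 1 = 1" using one_K co_one by (simp add: emb_def elr_def)
  moreover have "\<forall>x\<in>KK. \<forall>y\<in>KK. emb j (x + y) = emb j x + emb j y \<and> emb j (x * y) = emb j x * emb j y"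
  proof (intro ballI conjI)
    fix x y assume x: "x \<in> KK" and y: "y \<in> KK"
    obtain a0 a1 a2 where a: "co x = (a0,a1,a2)" by (cases "co x") auto
    obtain b0 b1 b2 where b: "co y = (b0,b1,b2)" by (cases "co y") auto
    show "emb j (x + y) = emb j x + emb j y"
      using K_add[OF x y] x y a b by (simp add: emb_def elr_def algebra_simps)
    show "emb j (x * y) = emb j x * emb j y"
      using K_mul[OF x y] x y r_mul[OF j, of "co x" "co y"] by (simp add: emb_def flip: of_real_mult)
  qed
  moreover have "\<forall>x. x \<notin> KK \<longrightarrow> emb j x = 0" by (simp add: emb_def)
  ultimately show ?thesis by (simp add: embeddings_def)
qed

lemma sig_basic:
  assumes s: "\<sigma> \<in> embeddings KK"
  shows "\<And>x y. x \<in> KK \<Longrightarrow> y \<in> KK \<Longrightarrow> \<sigma> (x + y) = \<sigma> x + \<sigma> y"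
    and "\<And>x y. x \<in> KK \<Longrightarrow> y \<in> KK \<Longrightarrow> \<sigma> (x * y) = \<sigma> x * \<sigma> y"
    and "\<sigma> 1 = 1" and "\<And>x. x \<notin> KK \<Longrightarrow> \<sigma> x = 0"
  using s by (auto simp: embeddings_def)

lemma sig_rat:
  assumes s: "\<sigma> \<in> embeddings KK" and q: "q \<in> \<rat>"
  shows "\<sigma> q = complex_of_real q"
proof -
  note b = sig_basic[OF s]
  have K: "\<And>x. x \<in> \<rat> \<Longrightarrow> x \<in> KK" using rat_K by blast
  have z: "\<sigma> 0 = 0"
  proof -
    have "\<sigma> (0 + 0) = \<sigma> 0 + \<sigma> 0" using b(1)[of 0 0] K by simp
    then show ?thesis by simp
  qed
  have nat: "\<sigma> (of_nat n) = of_nat n" for n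
  proof (induction n)
    case 0 then show ?case using z by simp
  next
    case (Suc n)
    have "\<sigma> (of_nat n + 1) = \<sigma> (of_nat n) + \<sigma> 1" using b(1)[of "of_nat n" 1] K by simp
    then show ?case using Suc b(3) by (simp add: add.commute)
  qed
  have neg: "\<sigma> (- x) = - \<sigma> x" if "x \<in> \<rat>" for x
  proof -
    have "\<sigma> (x + - x) = \<sigma> x + \<sigma> (- x)" using b(1)[of x "-x"] K that by simp
    then show ?thesis using z by (simp add: eq_neg_iff_add_eq_0 add.commute)
  qed
  have int: "\<sigma> (of_int m) = of_int m" for m
  proof (cases "m \<ge> 0")
    case True
    then have "of_int m = (of_nat (nat m) :: real)" by simp
    then show ?thesis using nat[of "nat m"] True by simp
  next
    case False
    then have "of_int m = - (of_nat (nat (-m)) :: real)" by simp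
    then show ?thesis using nat[of "nat (-m)"] neg[of "of_nat (nat (-m))"] False by simp
  qed
  from q obtain a b' where ab: "0 < b'" "q = of_int a / of_int b'" by (auto elim: Rats_cases')
  have e1: "\<sigma> (q * of_int b') = \<sigma> q * \<sigma> (of_int b')" using b(2)[of q "of_int b'"] K q by simp
  have e2: "q * of_int b' = of_int a" using ab by simp
  have "complex_of_int a = \<sigma> q * of_int b'" using e1 unfolding e2 int by simp
  then have "\<sigma> q = of_int a / of_int b'" using ab(1) by (simp add: field_simps)
  also have "\<dots> = complex_of_real q" using ab by simp
  finally show ?thesis .
qed

lemma sig_el:
  assumes s: "\<sigma> \<in> embeddings KK" and c: "isQ (c0,c1,c2)"
  shows "\<sigma> (el (c0,c1,c2)) = of_real c0 + of_real c1 * \<sigma> \<theta> + of_real c2 * (\<sigma> \<theta>)^2"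
proof -
  note b = sig_basic[OF s]
  have Q: "c0 \<in> \<rat>" "c1 \<in> \<rat>" "c2 \<in> \<rat>" using c by (auto simp: isQ_def)
  have K: "\<And>x. x \<in> \<rat> \<Longrightarrow> x \<in> KK" using rat_K by blast
  have tK: "\<theta> \<in> KK" by (rule th_K)
  have m1: "c1 * \<theta> \<in> KK" "\<theta> * \<theta> \<in> KK" using K_mul K Q tK by blast+
  have m2: "c2 * (\<theta> * \<theta>) \<in> KK" using K_mul K Q m1 by blast
  have m3: "c0 + c1 * \<theta> \<in> KK" using K_add K Q m1 by blast
  have "el (c0,c1,c2) = (c0 + c1 * \<theta>) + c2 * (\<theta> * \<theta>)" by (simp add: elr_def power2_eq_square)
  then have "\<sigma> (el (c0,c1,c2)) = \<sigma> (c0 + c1 * \<theta>) + \<sigma> (c2 * (\<theta> * \<theta>))" using b(1) m2 m3 by simp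
  also have "\<dots> = \<sigma> c0 + \<sigma> c1 * \<sigma> \<theta> + \<sigma> c2 * (\<sigma> \<theta> * \<sigma> \<theta>)"
    using b(1)[of c0 "c1*\<theta>"] b(2)[of c1 \<theta>] b(2)[of c2 "\<theta>*\<theta>"] b(2)[of \<theta> \<theta>] K Q tK m1 by simp
  finally show ?thesis using sig_rat[OF s] Q by (simp add: power2_eq_square)
qed

lemma emb_all:
  assumes s: "\<sigma> \<in> embeddings KK"
  shows "\<exists>j<3. \<sigma> = emb j"
proof -
  note b = sig_basic[OF s]
  define w where "w = \<sigma> \<theta>"
  have q3: "isQ (1, tr+3, tr)" by (simp add: isQ_def)
  have e3: "el (1, tr+3, tr) = \<theta> * \<theta> * \<theta>" using cub by (simp add: elr_def power3_eq_cube algebra_simps)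
  have tK: "\<theta> \<in> KK" by (rule th_K)
  have "\<theta> * \<theta> \<in> KK" using K_mul tK by blast
  then have "\<sigma> (\<theta> * \<theta> * \<theta>) = w * w * w" using b(2) tK w_def by simp
  moreover have "\<sigma> (el (1, tr+3, tr)) = 1 + of_real (tr+3) * w + of_real tr * w^2"
    using sig_el[OF s q3] w_def by simp
  ultimately have cw: "w^3 - of_real tr * w^2 - of_real (tr+3) * w - 1 = 0" using e3
    by (simp add: power2_eq_square power3_eq_cube algebra_simps)
  have v1: "of_real (r 0) + of_real (r 1) + of_real (r 2) = (of_real tr :: complex)"
    using arg_cong[OF vieta(1), of complex_of_real] by simp
  have v2: "of_real (r 0) * of_real (r 1) + of_real (r 0) * of_real (r 2) + of_real (r 1) * of_real (r 2) = - (of_real tr + 3 :: complex)"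
    using arg_cong[OF vieta(2), of complex_of_real] by simp
  have v3: "of_real (r 0) * of_real (r 1) * of_real (r 2) = (1 :: complex)"
    using arg_cong[OF vieta(3), of complex_of_real] by simp
  have "(w - of_real (r 0)) * (w - of_real (r 1)) * (w - of_real (r 2)) = 0"
    using cw v1 v2 v3 by (simp add: of_real_add) algebra
  then have "w = of_real (r 0) \<or> w = of_real (r 1) \<or> w = of_real (r 2)" by simp
  then obtain j where j: "j < 3" "w = of_real (r j)" by (elim disjE) (rule that; simp; fail)+
  have "\<sigma> = emb j"
  proof
    fix x
    show "\<sigma> x = emb j x"
    proof (cases "x \<in> KK")
      case True
      obtain c0 c1 c2 where c: "co x = (c0,c1,c2)" by (cases "co x") auto
      have cq: "isQ (c0,c1,c2)" and ex: "el (c0,c1,c2) = x" using co[OF True] c by auto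
      have "\<sigma> x = of_real c0 + of_real c1 * w + of_real c2 * w^2" using sig_el[OF s cq] ex w_def by simp
      then show ?thesis using True c j(2) by (simp add: emb_def elr_def)
    next
      case False then show ?thesis using b(4) by (simp add: emb_def)
    qed
  qed
  then show ?thesis using j by blast
qed

lemma emb_th: "j < 3 \<Longrightarrow> emb j \<theta> = of_real (r j)"
  using th_K co_th by (simp add: emb_def elr_def)

lemma emb_set: "embeddings KK = {emb 0, emb 1, emb 2}"
proof
  show "embeddings KK \<subseteq> {emb 0, emb 1, emb 2}"
  proof
    fix \<sigma> assume "\<sigma> \<in> embeddings KK"
    then obtain j where j: "j < 3" "\<sigma> = emb j" using emb_all by blast
    then have "j = 0 \<or> j = 1 \<or> j = 2" by arith
    then show "\<sigma> \<in> {emb 0, emb 1, emb 2}" using j(2) by auto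
  qed
  show "{emb 0, emb 1, emb 2} \<subseteq> embeddings KK" using emb_in by auto
qed

lemma emb_dist: "emb 0 \<noteq> emb 1" "emb 0 \<noteq> emb 2" "emb 1 \<noteq> emb 2"
proof -
  have a: "emb 0 \<theta> = of_real (r 0)" "emb 1 \<theta> = of_real (r 1)" "emb 2 \<theta> = of_real (r 2)"
    by (simp_all add: emb_th)
  show "emb 0 \<noteq> emb 1" using a r_distinct(1) by (metis of_real_eq_iff)
  show "emb 0 \<noteq> emb 2" using a r_distinct(2) by (metis of_real_eq_iff)
  show "emb 1 \<noteq> emb 2" using a r_distinct(3) by (metis of_real_eq_iff)
qed

lemma trace_eq: "x \<in> KK \<Longrightarrow> trace KK x = elr (r 0) (co x) + elr (r 1) (co x) + elr (r 2) (co x)"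
  using emb_dist by (simp add: trace_def emb_set emb_def)

end

context sc begin

lemma Tq_bridge:
  "elr (r 0) (c0,c1,c2) * (elr (r 0) (z0,z1,z2))^2 + elr (r 1) (c0,c1,c2) * (elr (r 1) (z0,z1,z2))^2
   + elr (r 2) (c0,c1,c2) * (elr (r 2) (z0,z1,z2))^2 = Tq tr c0 c1 c2 z0 z1 z2"
  unfolding Tq_expand psum[symmetric] elr_def by (simp; algebra)

lemma emb_mulK: "x \<in> KK \<Longrightarrow> y \<in> KK \<Longrightarrow> j < 3 \<Longrightarrow> elr (r j) (co (x*y)) = elr (r j) (co x) * elr (r j) (co y)"
  using K_mul r_mul by metis

lemma trace_Tq:
  assumes a: "a \<in> KK" and y: "y \<in> KK" and ca: "co a = (c0,c1,c2)" and cy: "co y = (z0,z1,z2)"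
  shows "trace KK (a * y^2) = Tq tr c0 c1 c2 z0 z1 z2"
proof -
  have yy: "y * y \<in> KK" using K_mul y by blast
  have ayy: "a * (y * y) \<in> KK" using K_mul a yy by blast
  have "\<And>j. j < 3 \<Longrightarrow> elr (r j) (co (a * (y*y))) = elr (r j) (c0,c1,c2) * (elr (r j) (z0,z1,z2))^2"
    using emb_mulK[OF a yy] emb_mulK[OF y y] ca cy by (simp add: power2_eq_square)
  then show ?thesis using trace_eq[OF ayy] Tq_bridge by (simp add: power2_eq_square)
qed

end

locale scK = sc +
  assumes hyp: "ring_of_integers (Q_adj \<theta>) = Z_adj \<theta>"
begin

abbreviation "OK \<equiv> ring_of_integers KK"
abbreviation "UU \<equiv> unit_group KK"

lemma OK_eq: "OK = {el c | c. isZ c}" using hyp Z_adj_eq by simp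

lemma OK_K: "x \<in> OK \<Longrightarrow> x \<in> KK" by (simp add: ring_of_integers_def)

lemma OK_co: "x \<in> OK \<Longrightarrow> isZ (co x)"
proof -
  assume "x \<in> OK"
  then obtain c where c: "isZ c" "x = el c" unfolding OK_eq by blast
  then have "co x = c" using co_eq isZ_isQ by blast
  then show ?thesis using c by simp
qed

lemma OK_mul: "x \<in> OK \<Longrightarrow> y \<in> OK \<Longrightarrow> x * y \<in> OK"
proof -
  assume "x \<in> OK" "y \<in> OK"
  then obtain c d where c: "isZ c" "x = el c" and d: "isZ d" "y = el d" unfolding OK_eq by blast
  have "x * y = el (mulc tr c d)" using c d el_mul by simp
  moreover have "isZ (mulc tr c d)" using c d by (intro isZ_mul) auto
  ultimately show ?thesis unfolding OK_eq by blast
qed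

lemma el_OK: "isZ c \<Longrightarrow> el c \<in> OK" unfolding OK_eq by blast

lemma U_mul: "u \<in> UU \<Longrightarrow> v \<in> UU \<Longrightarrow> u * v \<in> UU"
  unfolding unit_group_def using OK_mul by (auto simp: inverse_mult_distrib)

lemma U_OK: "u \<in> UU \<Longrightarrow> u \<in> OK \<and> u \<noteq> 0 \<and> inverse u \<in> OK"
  by (simp add: unit_group_def)

lemma one_U: "1 \<in> UU"
proof -
  have "el (1,0,0) = 1" by (simp add: elr_def)
  then have "1 \<in> OK" using el_OK[of "(1,0,0)"] by (simp add: isZ_def)
  then show ?thesis by (simp add: unit_group_def)
qed

lemma pair_U:
  assumes "isZ c" "isZ d" "mulc tr c d = (1,0,0)"
  shows "el c \<in> UU" "el d \<in> UU"
proof -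
  have p: "el c * el d = 1" using assms(3) el_mul[of c d] by (simp add: elr_def)
  then have "el c \<noteq> 0" "el d \<noteq> 0" by auto
  moreover have "inverse (el c) = el d" using p by (metis inverse_unique)
  moreover have "inverse (el d) = el c" using p by (metis inverse_unique mult.commute)
  ultimately show "el c \<in> UU" "el d \<in> UU" using el_OK assms by (auto simp: unit_group_def)
qed

lemma nb_units:
  "el (0,1,0) \<in> UU" "el (1, tr+1, -1) \<in> UU" "el (-2, -(tr+1), 1) \<in> UU"
  "el (-(tr+3), -tr, 1) \<in> UU" "el (tr+2, tr, -1) \<in> UU" "el (-1,-1,0) \<in> UU"
proof -
  have z: "isZ (0,1,0)" "isZ (1, tr+1, -1)" "isZ (-2, -(tr+1), 1)" "isZ (-(tr+3), -tr, 1)"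
    "isZ (tr+2, tr, -1)" "isZ (-1,-1,0)" by (auto simp: isZ_def)
  have m1: "mulc tr (0,1,0) (-(tr+3), -tr, 1) = (1,0,0)" by (simp add: mulc_def algebra_simps power2_eq_square)
  have m2: "mulc tr (-2, -(tr+1), 1) (-1,-1,0) = (1,0,0)" by (simp add: mulc_def algebra_simps power2_eq_square)
  have m3: "mulc tr (tr+2, tr, -1) (1, tr+1, -1) = (1,0,0)" by (simp add: mulc_def algebra_simps power2_eq_square)
  show "el (0,1,0) \<in> UU" "el (-(tr+3), -tr, 1) \<in> UU" using pair_U[OF z(1) z(4) m1] by auto
  show "el (-2, -(tr+1), 1) \<in> UU" "el (-1,-1,0) \<in> UU" using pair_U[OF z(3) z(6) m2] by auto
  show "el (tr+2, tr, -1) \<in> UU" "el (1, tr+1, -1) \<in> UU" using pair_U[OF z(5) z(2) m3] by auto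
qed

end

lemma abs3_bound:
  fixes v0 v1 v2 k0 k1 k2 M :: real
  assumes "\<bar>v0\<bar> \<le> M" "\<bar>v1\<bar> \<le> M" "\<bar>v2\<bar> \<le> M"
  shows "\<bar>v0*k0 + v1*k1 + v2*k2\<bar> \<le> M * (\<bar>k0\<bar> + \<bar>k1\<bar> + \<bar>k2\<bar>)"
proof -
  have "\<bar>v0*k0 + v1*k1 + v2*k2\<bar> \<le> \<bar>v0*k0\<bar> + \<bar>v1*k1\<bar> + \<bar>v2*k2\<bar>" by linarith
  also have "\<dots> = \<bar>v0\<bar>*\<bar>k0\<bar> + \<bar>v1\<bar>*\<bar>k1\<bar> + \<bar>v2\<bar>*\<bar>k2\<bar>" by (simp add: abs_mult)
  also have "\<dots> \<le> M*\<bar>k0\<bar> + M*\<bar>k1\<bar> + M*\<bar>k2\<bar>"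
    using assms by (intro add_mono mult_right_mono) auto
  finally show ?thesis by (simp add: algebra_simps)
qed

definition LB :: "real \<Rightarrow> real \<Rightarrow> real \<Rightarrow> real" where
  "LB x0 x1 x2 = (1 + \<bar>x1+x2\<bar> + \<bar>x1*x2\<bar>) * \<bar>1/((x0-x1)*(x0-x2))\<bar>
     + (1 + \<bar>x0+x2\<bar> + \<bar>x0*x2\<bar>) * \<bar>1/((x1-x0)*(x1-x2))\<bar>
     + (1 + \<bar>x0+x1\<bar> + \<bar>x0*x1\<bar>) * \<bar>1/((x2-x0)*(x2-x1))\<bar>"

lemma le_fac: "\<bar>k::real\<bar> \<le> (1 + \<bar>a\<bar> + \<bar>b\<bar>) * \<bar>k\<bar>" "\<bar>a*k\<bar> \<le> (1 + \<bar>a\<bar> + \<bar>b\<bar>) * \<bar>k\<bar>"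
   "\<bar>b*k\<bar> \<le> (1 + \<bar>a\<bar> + \<bar>b\<bar>) * \<bar>k\<bar>" "\<bar>-a*k\<bar> \<le> (1 + \<bar>a\<bar> + \<bar>b\<bar>) * \<bar>k\<bar>"
proof -
  have "1 * \<bar>k\<bar> \<le> (1 + \<bar>a\<bar> + \<bar>b\<bar>) * \<bar>k\<bar>" by (intro mult_right_mono) auto
  then show "\<bar>k::real\<bar> \<le> (1 + \<bar>a\<bar> + \<bar>b\<bar>) * \<bar>k\<bar>" by simp
  have "\<bar>a\<bar> * \<bar>k\<bar> \<le> (1 + \<bar>a\<bar> + \<bar>b\<bar>) * \<bar>k\<bar>" by (intro mult_right_mono) auto
  then show "\<bar>a*k\<bar> \<le> (1 + \<bar>a\<bar> + \<bar>b\<bar>) * \<bar>k\<bar>" "\<bar>-a*k\<bar> \<le> (1 + \<bar>a\<bar> + \<bar>b\<bar>) * \<bar>k\<bar>" by (simp_all add: abs_mult)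
  have "\<bar>b\<bar> * \<bar>k\<bar> \<le> (1 + \<bar>a\<bar> + \<bar>b\<bar>) * \<bar>k\<bar>" by (intro mult_right_mono) auto
  then show "\<bar>b*k\<bar> \<le> (1 + \<bar>a\<bar> + \<bar>b\<bar>) * \<bar>k\<bar>" by (simp add: abs_mult)
qed

lemma lagrange_bound:
  fixes x0 x1 x2 z0 z1 z2 M :: real
  assumes d: "x0 \<noteq> x1" "x0 \<noteq> x2" "x1 \<noteq> x2"
    and b: "\<bar>elr x0 (z0,z1,z2)\<bar> \<le> M" "\<bar>elr x1 (z0,z1,z2)\<bar> \<le> M" "\<bar>elr x2 (z0,z1,z2)\<bar> \<le> M"
  shows "\<bar>z0\<bar> \<le> M * LB x0 x1 x2 \<and> \<bar>z1\<bar> \<le> M * LB x0 x1 x2 \<and> \<bar>z2\<bar> \<le> M * LB x0 x1 x2"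
proof -
  define v0 where "v0 = elr x0 (z0,z1,z2)"
  define v1 where "v1 = elr x1 (z0,z1,z2)"
  define v2 where "v2 = elr x2 (z0,z1,z2)"
  define k0 where "k0 = 1/((x0-x1)*(x0-x2))"
  define k1 where "k1 = 1/((x1-x0)*(x1-x2))"
  define k2 where "k2 = 1/((x2-x0)*(x2-x1))"
  have kk: "k0*((x0-x1)*(x0-x2)) = 1" "k1*((x1-x0)*(x1-x2)) = 1" "k2*((x2-x0)*(x2-x1)) = 1"
    using d by (auto simp: k0_def k1_def k2_def)
  have vv: "v0 = z0 + z1*x0 + z2*x0^2" "v1 = z0 + z1*x1 + z2*x1^2" "v2 = z0 + z1*x2 + z2*x2^2"
    by (simp_all add: v0_def v1_def v2_def elr_def)
  have e2: "z2 = v0*k0 + v1*k1 + v2*k2" unfolding vv using kk by algebra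
  have e1: "z1 = v0*(-(x1+x2)*k0) + v1*(-(x0+x2)*k1) + v2*(-(x0+x1)*k2)" unfolding vv using kk by algebra
  have e0: "z0 = v0*(x1*x2*k0) + v1*(x0*x2*k1) + v2*(x0*x1*k2)" unfolding vv using kk by algebra
  have bb: "\<bar>v0\<bar> \<le> M" "\<bar>v1\<bar> \<le> M" "\<bar>v2\<bar> \<le> M" using b by (simp_all add: v0_def v1_def v2_def)
  have M0: "M \<ge> 0" using bb by linarith
  have LBk: "LB x0 x1 x2 = (1 + \<bar>x1+x2\<bar> + \<bar>x1*x2\<bar>) * \<bar>k0\<bar> + (1 + \<bar>x0+x2\<bar> + \<bar>x0*x2\<bar>) * \<bar>k1\<bar>
     + (1 + \<bar>x0+x1\<bar> + \<bar>x0*x1\<bar>) * \<bar>k2\<bar>" by (simp add: LB_def k0_def k1_def k2_def)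
  have L1: "\<bar>k0\<bar> + \<bar>k1\<bar> + \<bar>k2\<bar> \<le> LB x0 x1 x2"
    unfolding LBk by (rule add_mono[OF add_mono[OF le_fac(1) le_fac(1)] le_fac(1)])
  have L2: "\<bar>-(x1+x2)*k0\<bar> + \<bar>-(x0+x2)*k1\<bar> + \<bar>-(x0+x1)*k2\<bar> \<le> LB x0 x1 x2"
    unfolding LBk by (rule add_mono[OF add_mono[OF le_fac(4) le_fac(4)] le_fac(4)])
  have L3: "\<bar>x1*x2*k0\<bar> + \<bar>x0*x2*k1\<bar> + \<bar>x0*x1*k2\<bar> \<le> LB x0 x1 x2"
    unfolding LBk by (rule add_mono[OF add_mono[OF le_fac(3) le_fac(3)] le_fac(3)])
  have "\<bar>z2\<bar> \<le> M * LB x0 x1 x2"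
    using order_trans[OF abs3_bound[OF bb, of "k0" "k1" "k2"] mult_left_mono[OF L1 M0]] e2 by simp
  moreover have "\<bar>z1\<bar> \<le> M * LB x0 x1 x2"
    using order_trans[OF abs3_bound[OF bb, of "-(x1+x2)*k0" "-(x0+x2)*k1" "-(x0+x1)*k2"] mult_left_mono[OF L2 M0]] e1
    by simp
  moreover have "\<bar>z0\<bar> \<le> M * LB x0 x1 x2"
    using order_trans[OF abs3_bound[OF bb, of "x1*x2*k0" "x0*x2*k1" "x0*x1*k2"] mult_left_mono[OF L3 M0]] e0
    by simp
  ultimately show ?thesis by simp
qed


context scK begin

lemma trace_sq:
  assumes a: "a \<in> KK" and y: "y \<in> KK"
  shows "trace KK (a * y^2) = elr (r 0) (co a) * (elr (r 0) (co y))^2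
     + elr (r 1) (co a) * (elr (r 1) (co y))^2 + elr (r 2) (co a) * (elr (r 2) (co y))^2"
proof -
  obtain c0 c1 c2 where ca: "co a = (c0,c1,c2)" by (cases "co a") auto
  obtain z0 z1 z2 where cy: "co y = (z0,z1,z2)" by (cases "co y") auto
  show ?thesis using trace_Tq[OF a y ca cy] Tq_bridge[of c0 c1 c2 z0 z1 z2] ca cy by simp
qed

lemma tp_pos:
  assumes a: "a \<in> totally_positive KK" and j: "j < 3"
  shows "elr (r j) (co a) > 0"
proof -
  have aK: "a \<in> KK" using a by (simp add: totally_positive_def)
  have "Re (emb j a) > 0" using a emb_in[OF j] by (auto simp: totally_positive_def)
  then show ?thesis using aK by (simp add: emb_def)
qed

lemma f_nonneg:
  assumes a: "a \<in> totally_positive KK" and y: "y \<in> KK"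
  shows "trace KK (a * y^2) \<ge> 0"
proof -
  have aK: "a \<in> KK" using a by (simp add: totally_positive_def)
  have "elr (r j) (co a) * (elr (r j) (co y))^2 \<ge> 0" if "j < 3" for j
    using tp_pos[OF a that] by simp
  then show ?thesis unfolding trace_sq[OF aK y]
    by (metis add_nonneg_nonneg zero_less_numeral less_numeral_extra(4) numeral_less_iff
          one_less_numeral_iff semiring_norm(77) less_trans[of 1 2 3] rel_simps(49) zero_less_one
          pos2 numeral_2_eq_2 lessI numeral_3_eq_3)
qed

lemma abs_le_sq: "\<bar>v::real\<bar> \<le> 1 + v^2"
proof (cases "\<bar>v\<bar> \<le> 1")
  case True then show ?thesis by (smt (verit) zero_le_power2)
next
  case False
  then have "\<bar>v\<bar> * 1 \<le> \<bar>v\<bar> * \<bar>v\<bar>" by (intro mult_left_mono) auto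
  then show ?thesis by (simp add: power2_eq_square abs_mult_self)
qed

lemma finite_Zb: "finite {x::real. x \<in> \<int> \<and> \<bar>x\<bar> \<le> B}"
proof -
  have "{x::real. x \<in> \<int> \<and> \<bar>x\<bar> \<le> B} \<subseteq> of_int ` {-\<lceil>B\<rceil>..\<lceil>B\<rceil>}"
  proof
    fix x :: real assume "x \<in> {x. x \<in> \<int> \<and> \<bar>x\<bar> \<le> B}"
    then obtain m where m: "x = of_int m" "\<bar>of_int m\<bar> \<le> B" by (auto elim: Ints_cases)
    then have "-\<lceil>B\<rceil> \<le> m" "m \<le> \<lceil>B\<rceil>" by linarith+
    then show "x \<in> of_int ` {-\<lceil>B\<rceil>..\<lceil>B\<rceil>}" using m by auto
  qed
  then show ?thesis by (rule finite_subset) auto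
qed

lemma finite_S:
  assumes a: "a \<in> totally_positive KK"
  shows "finite {u \<in> UU. trace KK (a * u^2) \<le> C}"
proof -
  have aK: "a \<in> KK" using a by (simp add: totally_positive_def)
  define w0 where "w0 = elr (r 0) (co a)"
  define w1 where "w1 = elr (r 1) (co a)"
  define w2 where "w2 = elr (r 2) (co a)"
  have wp: "w0 > 0" "w1 > 0" "w2 > 0" using tp_pos[OF a] by (simp_all add: w0_def w1_def w2_def)
  define M where "M = 1 + \<bar>C\<bar>/w0 + \<bar>C\<bar>/w1 + \<bar>C\<bar>/w2"
  define B where "B = M * LB (r 0) (r 1) (r 2)"
  define Zb where "Zb = {x::real. x \<in> \<int> \<and> \<bar>x\<bar> \<le> B}"
  have sub: "{u \<in> UU. trace KK (a * u^2) \<le> C} \<subseteq> el ` (Zb \<times> Zb \<times> Zb)"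
  proof
    fix u assume u: "u \<in> {u \<in> UU. trace KK (a * u^2) \<le> C}"
    then have uO: "u \<in> OK" and fu: "trace KK (a * u^2) \<le> C" using U_OK by auto
    have uK: "u \<in> KK" using OK_K[OF uO] .
    obtain z0 z1 z2 where cu: "co u = (z0,z1,z2)" by (cases "co u") auto
    have zZ: "z0 \<in> \<int>" "z1 \<in> \<int>" "z2 \<in> \<int>" using OK_co[OF uO] cu by (auto simp: isZ_def)
    have elu: "el (z0,z1,z2) = u" using co[OF uK] cu by simp
    define v0 where "v0 = elr (r 0) (z0,z1,z2)"
    define v1 where "v1 = elr (r 1) (z0,z1,z2)"
    define v2 where "v2 = elr (r 2) (z0,z1,z2)"
    have fs: "w0 * v0^2 + w1 * v1^2 + w2 * v2^2 \<le> C"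
      using fu trace_sq[OF aK uK] cu by (simp add: w0_def w1_def w2_def v0_def v1_def v2_def)
    have nn: "w0 * v0^2 \<ge> 0" "w1 * v1^2 \<ge> 0" "w2 * v2^2 \<ge> 0" using wp by simp_all
    have bnd: "\<bar>v\<bar> \<le> M" if "w * v^2 \<le> C" "w > 0" "w \<in> {w0,w1,w2}" for v w
    proof -
      have "v^2 \<le> C / w" using that by (simp add: field_simps mult.commute)
      also have "\<dots> \<le> \<bar>C\<bar> / w" using that by (simp add: divide_right_mono)
      finally have "\<bar>v\<bar> \<le> 1 + \<bar>C\<bar> / w" using abs_le_sq[of v] by linarith
      moreover have "\<bar>C\<bar>/w0 \<ge> 0" "\<bar>C\<bar>/w1 \<ge> 0" "\<bar>C\<bar>/w2 \<ge> 0" using wp by simp_all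
      ultimately show ?thesis using that(3) unfolding M_def by auto
    qed
    have b0: "\<bar>v0\<bar> \<le> M" using fs nn wp by (intro bnd[of w0]) (linarith | simp)+
    have b1: "\<bar>v1\<bar> \<le> M" using fs nn wp by (intro bnd[of w1]) (linarith | simp)+
    have b2: "\<bar>v2\<bar> \<le> M" using fs nn wp by (intro bnd[of w2]) (linarith | simp)+
    have "\<bar>z0\<bar> \<le> B \<and> \<bar>z1\<bar> \<le> B \<and> \<bar>z2\<bar> \<le> B"
      unfolding B_def by (rule lagrange_bound[OF r_distinct]) (use b0 b1 b2 in \<open>simp_all add: v0_def v1_def v2_def\<close>)
    then have "(z0,z1,z2) \<in> Zb \<times> Zb \<times> Zb" using zZ by (simp add: Zb_def)
    then show "u \<in> el ` (Zb \<times> Zb \<times> Zb)" using elu by force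
  qed
  have "finite Zb" unfolding Zb_def by (rule finite_Zb)
  then show ?thesis using sub by (meson finite_SigmaI finite_imageI finite_subset)
qed

end

context scK begin

lemma exists_min:
  assumes a: "a \<in> totally_positive KK"
  shows "\<exists>v\<in>UU. \<forall>u\<in>UU. trace KK (a * v^2) \<le> trace KK (a * u^2)"
proof -
  define f where "f u = trace KK (a * u^2)" for u
  define S where "S = {u \<in> UU. f u \<le> f 1}"
  have fin: "finite S" unfolding S_def f_def by (rule finite_S[OF a])
  have oneS: "1 \<in> S" using one_U by (simp add: S_def)
  have "Min (f ` S) \<in> f ` S" using fin oneS by (intro Min_in) auto
  then obtain v where vS: "v \<in> S" and fv: "f v = Min (f ` S)" by auto
  have minS: "f v \<le> f u" if "u \<in> S" for u using fin that fv by simp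
  have "\<forall>u\<in>UU. f v \<le> f u"
  proof
    fix u assume u: "u \<in> UU"
    show "f v \<le> f u"
    proof (cases "u \<in> S")
      case True then show ?thesis by (rule minS)
    next
      case False
      then have "f u > f 1" using u by (simp add: S_def)
      moreover have "f v \<le> f 1" using minS oneS by blast
      ultimately show ?thesis by simp
    qed
  qed
  then show ?thesis using vS by (auto simp: S_def f_def)
qed

lemma main:
  assumes a: "a \<in> totally_positive KK" and y: "y \<in> OK" "y \<noteq> 0"
  shows "\<exists>v\<in>UU. trace KK (a * v^2) \<le> trace KK (a * y^2)"
proof -
  have aK: "a \<in> KK" using a by (simp add: totally_positive_def)
  obtain v where vU: "v \<in> UU" and vmin: "\<forall>u\<in>UU. trace KK (a * v^2) \<le> trace KK (a * u^2)"
    using exists_min[OF a] by blast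
  have vO: "v \<in> OK" "v \<noteq> 0" "inverse v \<in> OK" using U_OK[OF vU] by auto
  define b where "b = a * v^2"
  have bK: "b \<in> KK" unfolding b_def power2_eq_square using K_mul aK OK_K[OF vO(1)] by blast
  obtain c0 c1 c2 where cb: "co b = (c0,c1,c2)" by (cases "co b") auto
  define z where "z = y * inverse v"
  have zO: "z \<in> OK" unfolding z_def using OK_mul y(1) vO(3) by blast
  have zne: "z \<noteq> 0" unfolding z_def using y(2) vO(2) by simp
  obtain z0 z1 z2 where cz: "co z = (z0,z1,z2)" by (cases "co z") auto
  have zZ: "z0 \<in> \<int>" "z1 \<in> \<int>" "z2 \<in> \<int>" using OK_co[OF zO] cz by (auto simp: isZ_def)
  have zK: "z \<in> KK" using OK_K[OF zO] .
  have znz: "\<not> (z0 = 0 \<and> z1 = 0 \<and> z2 = 0)"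
  proof
    assume "z0 = 0 \<and> z1 = 0 \<and> z2 = 0"
    then have "el (co z) = 0" using cz by (simp add: elr_def)
    then show False using co[OF zK] zne by simp
  qed
  have tq: "trace KK (b * x^2) = Tq tr c0 c1 c2 x0 x1 x2" if "isZ (x0,x1,x2)" "el (x0,x1,x2) = x" for x x0 x1 x2
  proof -
    have "co x = (x0,x1,x2)" using co_eq[OF isZ_isQ[OF that(1)]] that(2) by simp
    moreover have "x \<in> KK" using el_in_K[OF isZ_isQ[OF that(1)]] that(2) by simp
    ultimately show ?thesis using trace_Tq[OF bK _ cb] by blast
  qed
  have nb: "trace KK (b * u^2) \<ge> trace KK (b * 1^2)" if "u \<in> UU" for u
  proof -
    have "v * u \<in> UU" using U_mul[OF vU that] .
    then have "trace KK (a * v^2) \<le> trace KK (a * (v*u)^2)" using vmin by blast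
    then show ?thesis by (simp add: b_def power_mult_distrib algebra_simps)
  qed
  have one: "trace KK (b * 1^2) = Tq tr c0 c1 c2 1 0 0"
    by (rule tq) (auto simp: isZ_def elr_def)
  have Zt: "tr \<in> \<int>" by simp
  have core_app: "Tq tr c0 c1 c2 z0 z1 z2 \<ge> Tq tr c0 c1 c2 1 0 0"
  proof (rule core[OF Zt zZ znz])
    show "Tq tr c0 c1 c2 0 1 0 \<ge> Tq tr c0 c1 c2 1 0 0"
      using nb[OF nb_units(1)] tq[of 0 1 0] one by (simp add: isZ_def)
    show "Tq tr c0 c1 c2 1 (tr+1) (-1) \<ge> Tq tr c0 c1 c2 1 0 0"
      using nb[OF nb_units(2)] tq[of 1 "tr+1" "-1"] one by (simp add: isZ_def)
    show "Tq tr c0 c1 c2 (-2) (-(tr+1)) 1 \<ge> Tq tr c0 c1 c2 1 0 0"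
      using nb[OF nb_units(3)] tq[of "-2" "-(tr+1)" 1] one by (simp add: isZ_def)
    show "Tq tr c0 c1 c2 (-(tr+3)) (-tr) 1 \<ge> Tq tr c0 c1 c2 1 0 0"
      using nb[OF nb_units(4)] tq[of "-(tr+3)" "-tr" 1] one by (simp add: isZ_def)
    show "Tq tr c0 c1 c2 (tr+2) tr (-1) \<ge> Tq tr c0 c1 c2 1 0 0"
      using nb[OF nb_units(5)] tq[of "tr+2" tr "-1"] one by (simp add: isZ_def)
    show "Tq tr c0 c1 c2 (-1) (-1) 0 \<ge> Tq tr c0 c1 c2 1 0 0"
      using nb[OF nb_units(6)] tq[of "-1" "-1" 0] one by (simp add: isZ_def)
  qed
  have "trace KK (b * z^2) = Tq tr c0 c1 c2 z0 z1 z2" using trace_Tq[OF bK zK cb cz] .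
  moreover have "b * z^2 = a * y^2" unfolding b_def z_def using vO(2)
    by (simp add: power_mult_distrib field_simps)
  ultimately have "trace KK (a * y^2) \<ge> trace KK (b * 1^2)" using core_app one by simp
  then show ?thesis using vU by (auto simp: b_def)
qed

end


theorem theorem5:
  fixes t :: int and \<theta> :: real
  assumes "t \<ge> -1"
    and "poly (simplest_cubic t) \<theta> = 0"
    and "ring_of_integers (Q_adj \<theta>) = Z_adj \<theta>"
  shows "unit_reducible (Q_adj \<theta>)"
proof -
  interpret scK t \<theta>
    by (unfold_locales) (use assms in auto)
  show ?thesis unfolding unit_reducible_def
  proof
    fix a assume a: "a \<in> totally_positive KK"
    have aK: "a \<in> KK" using a by (simp add: totally_positive_def)
    define f where "f x = trace KK (a * x^2)" for x
    define A where "A = f ` (OK - {0})"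
    define B where "B = f ` UU"
    have BA: "B \<subseteq> A" unfolding A_def B_def using U_OK by auto
    have Bne: "B \<noteq> {}" unfolding B_def using one_U by auto
    have Ane: "A \<noteq> {}" using BA Bne by auto
    have bA: "bdd_below A" unfolding A_def f_def
      by (rule bdd_belowI[of _ 0]) (use f_nonneg[OF a] OK_K in auto)
    have bB: "bdd_below B" using bA BA by (rule bdd_below_mono)
    have le1: "Inf A \<le> Inf B" by (rule cInf_superset_mono[OF Bne bA BA])
    have le2: "Inf B \<le> Inf A"
    proof (rule cInf_greatest[OF Ane])
      fix x assume "x \<in> A"
      then obtain y where y: "y \<in> OK" "y \<noteq> 0" "x = f y" unfolding A_def by auto
      then obtain v where v: "v \<in> UU" "f v \<le> f y" using main[OF a y(1,2)] unfolding f_def by blast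
      have "Inf B \<le> f v" using bB v(1) unfolding B_def by (intro cInf_lower) auto
      then show "Inf B \<le> x" using v(2) y(3) by simp
    qed
    have "mu KK a = Inf A" unfolding mu_def A_def f_def by simp
    also have "\<dots> = Inf B" using le1 le2 by simp
    finally show "mu KK a = Inf ((\<lambda>u. trace KK (a * u\<^sup>2)) ` UU)" unfolding B_def f_def by simp
  qed
qed


end
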